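(* Let $\mathcal{W}$ be a finite set (vocabulary of words), let $n \ge 1$, and let $\phi:\mathcal{W}\to\{0,1\}^n$ be a fixed map (a binary embedding, chosen independently of the input). Let $\varepsilon > 0$. Define the randomized mechanism $\mathrm{BRR}:\mathcal{W}\to\mathcal{W}$ as follows: on input $w\in\mathcal{W}$, compute $\phi_w=\phi(w)$; form $\hat\phi_w\in\{0,1\}^n$ by applying, independently to each coordinate $i$, the randomized response mechanism, i.e. $(\hat\phi_w)_i = (\phi_w)_i$ with probability $\frac{e^{\varepsilon}}{1+e^{\varepsilon}}$ and $(\hat\phi_w)_i = 1-(\phi_w)_i$ otherwise; then output $\hat w \in \operatorname{argmin}_{y\in\mathcal{W}} \|\phi(y)-\hat\phi_w\|$, where ties are broken by a fixed rule that depends only on $\hat\phi_w$ (not on $w$). Let $d(w,w')$ denote the Hamming distance between $\phi(w)$ and $\phi(w')$, i.e. the number of coordinates in which they differ. Then $\mathrm{BRR}$ is $\varepsilon d$-differentially private: for all $w,w'\in\mathcal{W}$ and all $y\in\mathcal{W}$, $$\Pr[\mathrm{BRR}(w)=y]\le e^{\varepsilon d(w,w')}\Pr[\mathrm{BRR}(w')=y].$$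
   Context: Metric differential privacy: given a set $\mathcal{W}$ with a distance $d:\mathcal{W}\times\mathcal{W}\to\mathbb{R}_{+}$, a randomized mechanism $\mathcal{M}:\mathcal{W}\to\mathcal{Y}$ is called $\varepsilon d$-differentially private if for all $w,w'\in\mathcal{W}$ and all outputs $y\in\mathcal{Y}$, $\Pr[\mathcal{M}(w)=y]\le e^{\varepsilon d(w,w')}\Pr[\mathcal{M}(w')=y]$. Here $\|\cdot\|$ is the Euclidean norm on $\mathbb{R}^n \supseteq \{0,1\}^n$. *)

theory Defs
  imports "HOL-Analysis.Analysis" "HOL-Probability.Probability"
begin

text \<open>Binary vectors in {0,1}^n are modelled as functions 'n \<Rightarrow> bool for a finite
  index type 'n (so n = CARD('n) \<ge> 1). They are embedded into R^n coordinatewise.\<close>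

definition bin_to_real :: "('n::finite \<Rightarrow> bool) \<Rightarrow> real ^ 'n" where
  "bin_to_real v = (\<chi> i. if v i then 1 else 0)"

definition rr_bit :: "real \<Rightarrow> bool \<Rightarrow> bool pmf" where
  "rr_bit eps b = map_pmf (\<lambda>keep. if keep then b else \<not> b) (bernoulli_pmf (exp eps / (1 + exp eps)))"

definition rr_vec :: "real \<Rightarrow> ('n::finite \<Rightarrow> bool) \<Rightarrow> ('n \<Rightarrow> bool) pmf" where
  "rr_vec eps v = Pi_pmf UNIV False (\<lambda>i. rr_bit eps (v i))"

text \<open>BRR mechanism: perturb the embedding, then decode with the fixed tie-breaking
  nearest-neighbour rule dec (depending only on the perturbed vector).\<close>
definition BRR :: "('w \<Rightarrow> ('n::finite \<Rightarrow> bool)) \<Rightarrow> (('n \<Rightarrow> bool) \<Rightarrow> 'w) \<Rightarrow> real \<Rightarrow> 'w \<Rightarrow> 'w pmf" where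
  "BRR \<phi> dec eps w = map_pmf dec (rr_vec eps (\<phi> w))"

definition hamming :: "('n::finite \<Rightarrow> bool) \<Rightarrow> ('n \<Rightarrow> bool) \<Rightarrow> nat" where
  "hamming u v = card {i. u i \<noteq> v i}"

end

theory Submission
  imports Defs
begin

lemma rr_bit_pmf:
  "pmf (rr_bit e b) c = (if b = c then exp e / (1 + exp e) else 1 / (1 + exp e))"
proof -
  have p0: "0 \<le> exp e / (1 + exp e)" "exp e / (1 + exp e) \<le> 1"
    by (auto simp: divide_simps add_pos_pos)
  have q: "1 - exp e / (1 + exp e) = 1 / (1 + exp e)"
    using add_pos_pos[of 1 "exp e"] by (simp add: field_simps)
  have "pmf (rr_bit e b) c = measure (bernoulli_pmf (exp e / (1 + exp e)))
          ((\<lambda>keep. if keep then b else \<not> b) -` {c})"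
    unfolding rr_bit_def pmf_map by simp
  also have "(\<lambda>keep. if keep then b else \<not> b) -` {c} = (if b = c then {True} else {False})"
    by auto
  finally show ?thesis using p0 q
    by (auto simp: measure_pmf_single)
qed

lemma rr_bit_ratio:
  assumes "e > 0"
  shows "pmf (rr_bit e b) c \<le> exp (e * (if b \<noteq> b' then 1 else 0)) * pmf (rr_bit e b') c"
proof -
  have pos: "0 < 1 + exp e" by (simp add: add_pos_pos)
  have le: "1 \<le> exp e" using assms by simp
  have le2: "1 \<le> exp e * exp e" using le by (metis mult_mono' one_le_mult_iff zero_le_one mult_1)
  show ?thesis
    using pos le le2 unfolding rr_bit_pmf
    by (auto simp: divide_simps) (use exp_gt_zero[of e] in linarith)+
qed

lemma rr_vec_pmf:
  "pmf (rr_vec e u) v = (\<Prod>i\<in>UNIV. pmf (rr_bit e (u i)) (v i))"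
  unfolding rr_vec_def by (simp add: pmf_Pi)

lemma rr_vec_ratio:
  assumes "e > 0"
  shows "pmf (rr_vec e (u::'n::finite \<Rightarrow> bool)) v \<le> exp (e * real (hamming u u')) * pmf (rr_vec e u') v"
proof -
  have "pmf (rr_vec e u) v \<le> (\<Prod>i\<in>UNIV. exp (e * (if u i \<noteq> u' i then 1 else 0)) * pmf (rr_bit e (u' i)) (v i))"
    unfolding rr_vec_pmf
    by (rule prod_mono) (use rr_bit_ratio[OF assms] in auto)
  also have "\<dots> = (\<Prod>i\<in>UNIV. exp (e * (if u i \<noteq> u' i then 1 else 0))) * pmf (rr_vec e u') v"
    unfolding rr_vec_pmf by (simp add: prod.distrib)
  also have "(\<Prod>i\<in>UNIV. exp (e * (if u i \<noteq> u' i then 1 else 0))) = exp (\<Sum>i\<in>UNIV. e * (if u i \<noteq> u' i then 1 else 0))"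
    by (simp add: exp_sum)
  also have "(\<Sum>i\<in>UNIV. e * (if u i \<noteq> u' i then 1 else (0::real))) = e * real (hamming u u')"
    unfolding hamming_def by (simp add: sum_distrib_left[symmetric] sum.If_cases)
  finally show ?thesis .
qed

theorem theorem3:
  fixes \<phi> :: "'w::finite \<Rightarrow> ('n::finite \<Rightarrow> bool)"
    and dec :: "('n \<Rightarrow> bool) \<Rightarrow> 'w"
    and \<epsilon> :: real
  assumes eps_pos: "\<epsilon> > 0"
    and dec_argmin: "\<And>v y. norm (bin_to_real (\<phi> (dec v)) - bin_to_real v)
                             \<le> norm (bin_to_real (\<phi> y) - bin_to_real v)"
  shows "\<forall>w w' y. pmf (BRR \<phi> dec \<epsilon> w) y
           \<le> exp (\<epsilon> * real (hamming (\<phi> w) (\<phi> w'))) * pmf (BRR \<phi> dec \<epsilon> w') y"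
proof (intro allI)
  fix w w' y
  have "pmf (BRR \<phi> dec \<epsilon> w) y = (\<Sum>v\<in>dec -` {y}. pmf (rr_vec \<epsilon> (\<phi> w)) v)"
    unfolding BRR_def pmf_map by (simp add: measure_measure_pmf_finite)
  also have "\<dots> \<le> (\<Sum>v\<in>dec -` {y}. exp (\<epsilon> * real (hamming (\<phi> w) (\<phi> w'))) * pmf (rr_vec \<epsilon> (\<phi> w')) v)"
    by (rule sum_mono) (rule rr_vec_ratio[OF eps_pos])
  also have "\<dots> = exp (\<epsilon> * real (hamming (\<phi> w) (\<phi> w'))) * pmf (BRR \<phi> dec \<epsilon> w') y"
    unfolding BRR_def pmf_map by (simp add: measure_measure_pmf_finite sum_distrib_left)
  finally show "pmf (BRR \<phi> dec \<epsilon> w) y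
           \<le> exp (\<epsilon> * real (hamming (\<phi> w) (\<phi> w'))) * pmf (BRR \<phi> dec \<epsilon> w') y" .
qed

end
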